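(* Consider the MSSN-MC-HC problem with costs $c_s>0$, $c_r>0$, and suppose $\frac{c_s}{c_r}\ge\overline{m}(\overline{m}+1)(h_{\max}-1)$ for some integer $\overline{m}$ with $1\le\overline{m}<m$, where $m=|Q|$. Then on every feasible instance, the approximation ratio of SmartSelect (cost of its output divided by the optimum cost) is at most $$\max\Big\{\epsilon+\frac{m}{\overline{m}},\ \frac{m}{2}\Big(1+\frac{1}{\overline{m}(\overline{m}+1)}\Big)\Big\},$$ where $\epsilon\in[0,1)$ is defined by $\lceil\frac{m}{\overline{m}+1}\rceil=\frac{m}{\overline{m}+1}+\epsilon$.
   Context: MSSN-MC-HC problem: given a finite undirected graph $G=(V,E)$ with $V=Q\cup R\cup B$ (pairwise disjoint; $Q$ = sources, $R$ = potential relay locations, $B$ = potential sink locations), costs $c_s$ per sink and $c_r$ per relay, and a positive integer $h_{\max}$, select $B'\subseteq B$, $R'\subseteq R$ such that in the subgraph induced by $Q\cup R'\cup B'$ every source has a path of at most $h_{\max}$ edges to some sink of $B'$ (a feasible solution), minimizing $c_s|B'|+c_r|R'|$. An instance is feasible if a feasible solution exists. SmartSelect algorithm: (1) If for some $b\in B$ every source has a path of at most $h_{\max}$ edges to $b$ in the subgraph induced by $Q\cup B$, output $(\{b\},\emptyset)$. (2) If some source has no path of at most $h_{\max}$ edges in $G$ to any sink, declare infeasible. (3) For each $b_i\in B$ let $Q_i$ be the set of sources whose shortest path to $b_i$ in $G$ has at most $h_{\max}$ edges, and $R_i$ the set of relays whose shortest path to $b_i$ has at most $h_{\max}-1$ edges.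 (4) Greedy phase, iterations $j=0,1,\dots$: $B^{(0)}=B$, $Q_i^{(0)}=Q_i$; $B^{(j)}$ is the set of sinks not yet picked and $Q_i^{(j)}$ the set of sources of $Q_i$ not yet covered. In iteration $j$, for each $b_i\in B^{(j)}$, a relay-selection subroutine (e.g. the SPTiRP algorithm) applied to the subgraph of $G$ induced by $Q_i^{(j)}\cup R_i\cup\{b_i\}$ returns a set $\hat R_i^{(j)}\subseteq R_i$ consisting of the relays on one chosen path of at most $h_{\max}$ edges from each source of $Q_i^{(j)}$ to $b_i$. Let $n_i^{(j)}$ be the number of relays in $\hat R_i^{(j)}$ not selected in earlier iterations (earlier-selected relays have cost zero thereafter), and $C_i^{(j)}=\frac{c_s+c_r n_i^{(j)}}{|Q_i^{(j)}|}$. The sink $b_i$ with least $C_i^{(j)}$ is picked (ties broken in favor of larger $|Q_i^{(j)}|$), its sources $Q_i^{(j)}$ become covered and the relays $\hat R_i^{(j)}$ are selected. Stop when all sources are covered; output the picked sinks and selected relays. *)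

theory Defs
  imports Complex_Main
begin

definition is_graph :: "'v set \<Rightarrow> 'v set set \<Rightarrow> bool" where
  "is_graph V E \<longleftrightarrow> finite V \<and>
     (\<forall>e\<in>E. \<exists>u w. u \<noteq> w \<and> u \<in> V \<and> w \<in> V \<and> e = {u, w})"

text \<open>A walk given as a nonempty vertex list inside the vertex set S, consecutive
  vertices adjacent; it has (length p - 1) edges.  A path of at most h edges
  exists iff a walk of at most h edges exists.\<close>

definition walk_in :: "'v set set \<Rightarrow> 'v set \<Rightarrow> 'v \<Rightarrow> 'v \<Rightarrow> 'v list \<Rightarrow> bool" where
  "walk_in E S u w p \<longleftrightarrow> p \<noteq> [] \<and> hd p = u \<and> last p = w \<and> set p \<subseteq> S \<and>
     (\<forall>i. i + 1 < length p \<longrightarrow> {p ! i, p ! (i + 1)} \<in> E)"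

definition reach_within :: "'v set set \<Rightarrow> 'v set \<Rightarrow> nat \<Rightarrow> 'v \<Rightarrow> 'v \<Rightarrow> bool" where
  "reach_within E S h u w \<longleftrightarrow> (\<exists>p. walk_in E S u w p \<and> length p \<le> h + 1)"

definition mssn_instance ::
  "'v set \<Rightarrow> 'v set set \<Rightarrow> 'v set \<Rightarrow> 'v set \<Rightarrow> 'v set \<Rightarrow> nat \<Rightarrow> bool" where
  "mssn_instance V E Q R B h \<longleftrightarrow> is_graph V E \<and> V = Q \<union> R \<union> B \<and>
     Q \<inter> R = {} \<and> Q \<inter> B = {} \<and> R \<inter> B = {} \<and> h > 0"

definition feasible_sol ::
  "'v set set \<Rightarrow> 'v set \<Rightarrow> 'v set \<Rightarrow> 'v set \<Rightarrow> nat \<Rightarrow> 'v set \<times> 'v set \<Rightarrow> bool" where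
  "feasible_sol E Q R B h sol \<longleftrightarrow> (case sol of (B', R') \<Rightarrow>
     B' \<subseteq> B \<and> R' \<subseteq> R \<and>
     (\<forall>q\<in>Q. \<exists>b\<in>B'. reach_within E (Q \<union> R' \<union> B') h q b))"

definition feasible_instance ::
  "'v set set \<Rightarrow> 'v set \<Rightarrow> 'v set \<Rightarrow> 'v set \<Rightarrow> nat \<Rightarrow> bool" where
  "feasible_instance E Q R B h \<longleftrightarrow> (\<exists>sol. feasible_sol E Q R B h sol)"

definition sol_cost :: "real \<Rightarrow> real \<Rightarrow> 'v set \<times> 'v set \<Rightarrow> real" where
  "sol_cost cs cr sol = cs * real (card (fst sol)) + cr * real (card (snd sol))"

definition opt_cost ::
  "real \<Rightarrow> real \<Rightarrow> 'v set set \<Rightarrow> 'v set \<Rightarrow> 'v set \<Rightarrow> 'v set \<Rightarrow> nat \<Rightarrow> real" where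
  "opt_cost cs cr E Q R B h = Min (sol_cost cs cr ` {sol. feasible_sol E Q R B h sol})"

text \<open>Step (3): Q_i and R_i for sink b (shortest paths in G = walks in V).\<close>

definition srcs_of :: "'v set \<Rightarrow> 'v set set \<Rightarrow> 'v set \<Rightarrow> nat \<Rightarrow> 'v \<Rightarrow> 'v set" where
  "srcs_of V E Q h b = {q \<in> Q. reach_within E V h q b}"

definition rels_of :: "'v set \<Rightarrow> 'v set set \<Rightarrow> 'v set \<Rightarrow> nat \<Rightarrow> 'v \<Rightarrow> 'v set" where
  "rels_of V E R h b = {r \<in> R. reach_within E V (h - 1) r b}"

definition valid_subroutine ::
  "'v set \<Rightarrow> 'v set set \<Rightarrow> 'v set \<Rightarrow> nat \<Rightarrow> 'v set \<Rightarrow> 'v \<Rightarrow> 'v set \<Rightarrow> bool" where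
  "valid_subroutine V E R h Qc b Rhat \<longleftrightarrow>
     (\<exists>pth. (\<forall>q\<in>Qc. walk_in E (Qc \<union> rels_of V E R h b \<union> {b}) q b (pth q) \<and>
                     length (pth q) \<le> h + 1) \<and>
            Rhat = (\<Union>q\<in>Qc. set (pth q)) \<inter> R)"

text \<open>State: (picked sinks, selected relays, covered sources).\<close>

definition greedy_step ::
  "real \<Rightarrow> real \<Rightarrow> 'v set \<Rightarrow> 'v set set \<Rightarrow> 'v set \<Rightarrow> 'v set \<Rightarrow> 'v set \<Rightarrow> nat \<Rightarrow>
   'v set \<times> 'v set \<times> 'v set \<Rightarrow> 'v set \<times> 'v set \<times> 'v set \<Rightarrow> bool" where
  "greedy_step cs cr V E Q R B h st st' \<longleftrightarrow>
    (case st of (P, Rs, C) \<Rightarrow>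
      (let Qc = (\<lambda>b. srcs_of V E Q h b - C);
           cand = {b \<in> B - P. Qc b \<noteq> {}}
       in C \<noteq> Q \<and>
          (\<exists>Rh b. (\<forall>b'\<in>cand. valid_subroutine V E R h (Qc b') b' (Rh b')) \<and>
             (let cst = (\<lambda>b'. (cs + cr * real (card (Rh b' - Rs))) / real (card (Qc b')))
              in b \<in> cand \<and>
                 (\<forall>b'\<in>cand. cst b \<le> cst b' \<and>
                    (cst b = cst b' \<longrightarrow> card (Qc b') \<le> card (Qc b))) \<and>
                 st' = (insert b P, Rs \<union> Rh b, C \<union> Qc b)))))"

text \<open>Possible outputs of SmartSelect (any subroutine output satisfying the
  specification, any remaining tie-breaking).  Step (2) never fires on feasible
  instances.\<close>

definition smart_select_output ::
  "real \<Rightarrow> real \<Rightarrow> 'v set \<Rightarrow> 'v set set \<Rightarrow> 'v set \<Rightarrow> 'v set \<Rightarrow> 'v set \<Rightarrow> nat \<Rightarrow>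
   'v set \<times> 'v set \<Rightarrow> bool" where
  "smart_select_output cs cr V E Q R B h out \<longleftrightarrow>
    (if (\<exists>b\<in>B. \<forall>q\<in>Q. reach_within E (Q \<union> B) h q b)
     then (\<exists>b\<in>B. (\<forall>q\<in>Q. reach_within E (Q \<union> B) h q b) \<and> out = ({b}, {}))
     else (\<exists>P Rs. (greedy_step cs cr V E Q R B h)\<^sup>*\<^sup>* ({}, {}, {}) (P, Rs, Q) \<and>
                 out = (P, Rs)))"

end

theory Submission
  imports Defs
begin

lemma walk_mono:
  assumes "walk_in E S u w p" "S \<subseteq> T" shows "walk_in E T u w p"
  using assms unfolding walk_in_def by (meson order_trans)

lemma reach_mono:
  assumes "reach_within E S h u w" "S \<subseteq> T" shows "reach_within E T h u w"
proof -
  from assms(1) obtain p where "walk_in E S u w p" "length p \<le> h + 1"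
    unfolding reach_within_def by blast
  then show ?thesis using walk_mono[OF _ assms(2)] unfolding reach_within_def by blast
qed

lemma path_relays:
  assumes "walk_in E S q b p" "length p \<le> h + 1" "q \<notin> R" "b \<notin> R" "q \<noteq> b"
  shows "card (set p \<inter> R) \<le> h - 1"
proof -
  from assms(1) have ne: "p \<noteq> []" and hd: "hd p = q" and la: "last p = b"
    unfolding walk_in_def by auto
  obtain p' where p: "p = q # p'" using ne hd by (cases p) auto
  have ne': "p' \<noteq> []" using p la assms(5) by auto
  have lp': "last p' = b" using p la ne' by simp
  have "set p \<inter> R \<subseteq> set (butlast p')"
  proof
    fix x assume x: "x \<in> set p \<inter> R"
    then have "x \<noteq> q" "x \<noteq> b" using assms(3,4) by auto
    then have "x \<in> set p'" using x p by auto
    moreover have "p' = butlast p' @ [last p']" using ne' by simp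
    ultimately show "x \<in> set (butlast p')" using lp' \<open>x \<noteq> b\<close>
      by (metis Un_iff empty_iff empty_set list.set(2) set_append singleton_iff)
  qed
  then have "card (set p \<inter> R) \<le> card (set (butlast p'))"
    by (simp add: card_mono)
  also have "\<dots> \<le> length (butlast p')" by (rule card_length)
  also have "\<dots> \<le> h - 1" using assms(2) p by simp
  finally show ?thesis .
qed

lemma sub_card:
  assumes "valid_subroutine V E R h Qc b Rh" "finite Qc" "Qc \<inter> R = {}" "b \<notin> R" "b \<notin> Qc"
  shows "card Rh \<le> card Qc * (h - 1)" and "Rh \<subseteq> R"
proof -
  obtain pth where pth: "\<forall>q\<in>Qc. walk_in E (Qc \<union> rels_of V E R h b \<union> {b}) q b (pth q) \<and>
                     length (pth q) \<le> h + 1" and Rh: "Rh = (\<Union>q\<in>Qc. set (pth q)) \<inter> R"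
    using assms(1) unfolding valid_subroutine_def by blast
  show "Rh \<subseteq> R" using Rh by auto
  have "Rh = (\<Union>q\<in>Qc. set (pth q) \<inter> R)" using Rh by auto
  then have "card Rh = card (\<Union>q\<in>Qc. set (pth q) \<inter> R)" by simp
  also have "\<dots> \<le> (\<Sum>q\<in>Qc. card (set (pth q) \<inter> R))"
    by (rule card_UN_le[OF assms(2)])
  also have "\<dots> \<le> (\<Sum>q\<in>Qc. h - 1)"
  proof (rule sum_mono)
    fix q assume q: "q \<in> Qc"
    from pth q have w: "walk_in E (Qc \<union> rels_of V E R h b \<union> {b}) q b (pth q)"
      and l: "length (pth q) \<le> h + 1" by auto
    show "card (set (pth q) \<inter> R) \<le> h - 1"
      using path_relays[OF w l] q assms(3,4,5) by auto
  qed
  finally show "card Rh \<le> card Qc * (h - 1)" by simp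
qed

lemma arith_key:
  fixes cs :: real and k u mbar :: nat
  assumes "cs > 0" "k \<ge> 1" "k + 1 \<le> u" "k \<le> mbar"
  shows "cs / k \<ge> cs / u + cs / (real mbar * (real mbar + 1))"
proof -
  have "1 / real u \<le> 1 / (real k + 1)" using assms by (simp add: frac_le)
  have "real k * (real k + 1) \<le> real mbar * (real mbar + 1)"
    using assms by (intro mult_mono) auto
  then have "1 / (real mbar * (real mbar + 1)) \<le> 1 / (real k * (real k + 1))"
    using assms by (intro divide_left_mono) auto
  moreover have "1 / (real k * (real k + 1)) = 1 / real k - 1 / (real k + 1)"
    using assms by (simp add: field_simps)
  ultimately have "1 / real u + 1 / (real mbar * (real mbar + 1)) \<le> 1 / real k"
    using \<open>1 / real u \<le> 1 / (real k + 1)\<close> by linarith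
  then have "cs * (1 / real u + 1 / (real mbar * (real mbar + 1))) \<le> cs * (1 / real k)"
    using assms(1) by (intro mult_left_mono) auto
  then show ?thesis by (simp add: field_simps)
qed

lemma step_elim:
  assumes "greedy_step cs cr V E Q R B h (P, Rs, C) st'"
  obtains Rh b where "C \<noteq> Q"
    "\<And>b'. b' \<in> B \<Longrightarrow> b' \<notin> P \<Longrightarrow> srcs_of V E Q h b' - C \<noteq> {} \<Longrightarrow>
        valid_subroutine V E R h (srcs_of V E Q h b' - C) b' (Rh b')"
    "b \<in> B" "b \<notin> P" "srcs_of V E Q h b - C \<noteq> {}"
    "\<And>b'. b' \<in> B \<Longrightarrow> b' \<notin> P \<Longrightarrow> srcs_of V E Q h b' - C \<noteq> {} \<Longrightarrow>
       (cs + cr * real (card (Rh b - Rs))) / real (card (srcs_of V E Q h b - C))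
         \<le> (cs + cr * real (card (Rh b' - Rs))) / real (card (srcs_of V E Q h b' - C)) \<and>
       ((cs + cr * real (card (Rh b - Rs))) / real (card (srcs_of V E Q h b - C))
         = (cs + cr * real (card (Rh b' - Rs))) / real (card (srcs_of V E Q h b' - C))
        \<longrightarrow> card (srcs_of V E Q h b' - C) \<le> card (srcs_of V E Q h b - C))"
    "st' = (insert b P, Rs \<union> Rh b, C \<union> (srcs_of V E Q h b - C))"
proof -
  from assms show ?thesis unfolding greedy_step_def Let_def
    apply simp
    apply (elim conjE exE)
    apply (rule that)
    apply auto
    done
qed

definition inv0 where
  "inv0 V E Q R B h st \<longleftrightarrow> (case st of (P, Rs, C) \<Rightarrow> finite P \<and> P \<subseteq> B \<and> C \<subseteq> Q \<and> Rs \<subseteq> R \<and>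
     card Rs \<le> (h - 1) * card C \<and> card P \<le> card C \<and> (\<forall>b\<in>P. srcs_of V E Q h b \<subseteq> C))"

lemma inv0_reach:
  assumes inst: "mssn_instance V E Q R B h"
    and "(greedy_step cs cr V E Q R B h)\<^sup>*\<^sup>* ({}, {}, {}) st"
  shows "inv0 V E Q R B h st"
  using assms(2)
proof (induction rule: rtranclp_induct)
  case base
  then show ?case unfolding inv0_def by simp
next
  case (step y z)
  obtain P Rs C where y: "y = (P, Rs, C)" by (cases y) auto
  from inst have finV: "finite V" and V: "V = Q \<union> R \<union> B" and d1: "Q \<inter> R = {}" and d2: "Q \<inter> B = {}"
    and d3: "R \<inter> B = {}"
    unfolding mssn_instance_def is_graph_def by auto
  have finQ: "finite Q" using finV V by auto
  from step.IH y have I: "finite P" "P \<subseteq> B" "C \<subseteq> Q" "Rs \<subseteq> R" "card Rs \<le> (h - 1) * card C"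
      "card P \<le> card C" "\<forall>b\<in>P. srcs_of V E Q h b \<subseteq> C"
    unfolding inv0_def by auto
  obtain Rh b where
    v: "\<And>b'. b' \<in> B \<Longrightarrow> b' \<notin> P \<Longrightarrow> srcs_of V E Q h b' - C \<noteq> {} \<Longrightarrow>
        valid_subroutine V E R h (srcs_of V E Q h b' - C) b' (Rh b')"
    and b: "b \<in> B" "b \<notin> P" "srcs_of V E Q h b - C \<noteq> {}"
    and z: "z = (insert b P, Rs \<union> Rh b, C \<union> (srcs_of V E Q h b - C))"
    apply (rule step_elim[OF step.hyps(2)[unfolded y]]) by blast
  define K where "K = srcs_of V E Q h b - C"
  have KQ: "K \<subseteq> Q" unfolding K_def srcs_of_def by auto
  have finK: "finite K" using KQ finQ finite_subset by blast
  have finC: "finite C" using I(3) finQ finite_subset by blast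
  have vb: "valid_subroutine V E R h K b (Rh b)" using v b unfolding K_def by auto
  have bR: "b \<notin> R" "b \<notin> K" using b d3 d2 KQ by auto
  have KR: "K \<inter> R = {}" using KQ d1 by auto
  have cR: "card (Rh b) \<le> card K * (h - 1)" and RR: "Rh b \<subseteq> R"
    using sub_card[OF vb finK KR bR] by auto
  have cK: "card (C \<union> K) = card C + card K"
    by (rule card_Un_disjoint[OF finC finK]) (auto simp: K_def)
  have K1: "card K \<ge> 1" using b(3) finK unfolding K_def[symmetric]
    by (simp add: Suc_leI card_gt_0_iff)
  have "card (Rs \<union> Rh b) \<le> card Rs + card (Rh b)" by (rule card_Un_le)
  also have "\<dots> \<le> (h - 1) * card C + card K * (h - 1)" using I(5) cR by linarith
  also have "\<dots> = (h - 1) * card (C \<union> K)" using cK by (simp add: algebra_simps)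
  finally have c1: "card (Rs \<union> Rh b) \<le> (h - 1) * card (C \<union> K)" .
  have c2: "card (insert b P) \<le> card (C \<union> K)" using I(1,6) b(2) cK K1 by simp
  have c3: "\<forall>b'\<in>insert b P. srcs_of V E Q h b' \<subseteq> C \<union> K"
    using I(7) unfolding K_def by auto
  show ?case unfolding z inv0_def K_def[symmetric]
    using I b c1 c2 c3 KQ RR by auto
qed


lemma inv1_reach:
  assumes inst: "mssn_instance V E Q R B h"
    and cs: "cs > 0" and cr: "cr > 0"
    and hyp: "cr * (real h - 1) \<le> cs / (real mbar * (real mbar + 1))"
    and mb: "mbar \<ge> 1"
    and bs: "bs \<in> B" "srcs_of V E Q h bs = Q" and Qne: "Q \<noteq> {}"
    and "(greedy_step cs cr V E Q R B h)\<^sup>*\<^sup>* ({}, {}, {}) st"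
  shows "case st of (P, Rs, C) \<Rightarrow> (C \<noteq> Q \<longrightarrow> card P * (mbar + 1) \<le> card C) \<and>
           (C = Q \<longrightarrow> (card P - 1) * (mbar + 1) < card C)"
  using assms(9)
proof (induction rule: rtranclp_induct)
  case base
  then show ?case using Qne by simp
next
  case (step y z)
  obtain P Rs C where y: "y = (P, Rs, C)" by (cases y) auto
  from inst have finV: "finite V" and V: "V = Q \<union> R \<union> B" and d1: "Q \<inter> R = {}" and d2: "Q \<inter> B = {}"
    and d3: "R \<inter> B = {}" and h0: "h > 0"
    unfolding mssn_instance_def is_graph_def by auto
  have finQ: "finite Q" using finV V by auto
  from inv0_reach[OF inst step.hyps(1)] y have I: "finite P" "P \<subseteq> B" "C \<subseteq> Q" "Rs \<subseteq> R"
      "\<forall>b\<in>P. srcs_of V E Q h b \<subseteq> C"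
    unfolding inv0_def by auto
  obtain Rh b where CQ: "C \<noteq> Q" and
    v: "\<And>b'. b' \<in> B \<Longrightarrow> b' \<notin> P \<Longrightarrow> srcs_of V E Q h b' - C \<noteq> {} \<Longrightarrow>
        valid_subroutine V E R h (srcs_of V E Q h b' - C) b' (Rh b')"
    and b: "b \<in> B" "b \<notin> P" "srcs_of V E Q h b - C \<noteq> {}"
    and sel: "\<And>b'. b' \<in> B \<Longrightarrow> b' \<notin> P \<Longrightarrow> srcs_of V E Q h b' - C \<noteq> {} \<Longrightarrow>
       (cs + cr * real (card (Rh b - Rs))) / real (card (srcs_of V E Q h b - C))
         \<le> (cs + cr * real (card (Rh b' - Rs))) / real (card (srcs_of V E Q h b' - C)) \<and>
       ((cs + cr * real (card (Rh b - Rs))) / real (card (srcs_of V E Q h b - C))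
         = (cs + cr * real (card (Rh b' - Rs))) / real (card (srcs_of V E Q h b' - C))
        \<longrightarrow> card (srcs_of V E Q h b' - C) \<le> card (srcs_of V E Q h b - C))"
    and z: "z = (insert b P, Rs \<union> Rh b, C \<union> (srcs_of V E Q h b - C))"
    apply (rule step_elim[OF step.hyps(2)[unfolded y]]) by blast
  from step.IH y CQ have IH: "card P * (mbar + 1) \<le> card C" by auto
  define K where "K = srcs_of V E Q h b - C"
  have KQ: "K \<subseteq> Q" unfolding K_def srcs_of_def by auto
  have finK: "finite K" using KQ finQ finite_subset by blast
  have finC: "finite C" using I(3) finQ finite_subset by blast
  have cK: "card (C \<union> K) = card C + card K"
    by (rule card_Un_disjoint[OF finC finK]) (auto simp: K_def)
  have K1: "card K \<ge> 1" using b(3) finK unfolding K_def[symmetric]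
    by (simp add: Suc_leI card_gt_0_iff)
  have cP: "card (insert b P) = card P + 1" using I(1) b(2) by simp
  show ?case
  proof (cases "C \<union> K = Q")
    case True
    then show ?thesis unfolding z K_def[symmetric] using IH cK K1 cP by auto
  next
    case False
    define U where "U = Q - C"
    have bsP: "bs \<notin> P" using I(3,5) bs CQ by blast
    have bsU: "srcs_of V E Q h bs - C = U" using bs unfolding U_def by simp
    have Une: "U \<noteq> {}" using CQ I(3) unfolding U_def by auto
    have KU: "K \<subset> U" using False KQ I(3) unfolding U_def K_def by (auto simp: srcs_of_def)
    have finU: "finite U" using finQ unfolding U_def by simp
    have ku: "card K < card U" using psubset_card_mono[OF finU KU] .
    have big: "card K \<ge> mbar + 1"
    proof (rule ccontr)
      assume "\<not> card K \<ge> mbar + 1"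
      then have kle: "card K \<le> mbar" by simp
      define cb where "cb = (cs + cr * real (card (Rh b - Rs))) / real (card K)"
      define cbs where "cbs = (cs + cr * real (card (Rh bs - Rs))) / real (card U)"
      from sel[OF bs(1) bsP] bsU Une
      have s1: "cb \<le> cbs" and s2: "cb = cbs \<longrightarrow> card U \<le> card K"
        unfolding cb_def cbs_def K_def by auto
      have lt: "cb < cbs" using s1 s2 ku by linarith
      have "cs / real (card K) \<le> cb" unfolding cb_def
        using cr K1 by (intro divide_right_mono) auto
      have vbs: "valid_subroutine V E R h U bs (Rh bs)" using v[OF bs(1) bsP] bsU Une by simp
      have UR: "U \<inter> R = {}" using d1 unfolding U_def by auto
      have bsR: "bs \<notin> R" "bs \<notin> U" using bs(1) d2 d3 unfolding U_def by auto
      have cR: "card (Rh bs) \<le> card U * (h - 1)" using sub_card(1)[OF vbs finU UR bsR] .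
      have finR: "finite R" using finV V by auto
      have finRh: "finite (Rh bs)" using sub_card(2)[OF vbs finU UR bsR] finR finite_subset by blast
      have n: "card (Rh bs - Rs) \<le> card U * (h - 1)"
        using card_mono[OF finRh, of "Rh bs - Rs"] cR by auto
      have hr: "real (h - 1) = real h - 1" using h0 by simp
      have u0: "real (card U) > 0" using Une finU by (simp add: card_gt_0_iff)
      have "real (card (Rh bs - Rs)) \<le> real (card U) * (real h - 1)"
        using n hr by (metis of_nat_le_iff of_nat_mult)
      then have "cbs \<le> (cs + cr * (real (card U) * (real h - 1))) / real (card U)"
        unfolding cbs_def using cr u0 by (intro divide_right_mono add_left_mono mult_left_mono) auto
      also have "\<dots> = cs / real (card U) + cr * (real h - 1)" using u0 by (simp add: field_simps)
      also have "\<dots> \<le> cs / real (card U) + cs / (real mbar * (real mbar + 1))" using hyp by simp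
      finally have "cs / real (card K) < cs / real (card U) + cs / (real mbar * (real mbar + 1))"
        using lt \<open>cs / real (card K) \<le> cb\<close> by linarith
      moreover have "cs / real (card K) \<ge> cs / real (card U) + cs / (real mbar * (real mbar + 1))"
        using arith_key[OF cs K1 _ kle, of "card U"] ku by simp
      ultimately show False by linarith
    qed
    show ?thesis unfolding z K_def[symmetric] using IH cK big cP False by auto
  qed
qed


lemma ceil_bound:
  fixes s m mb :: nat
  assumes "(s - 1) * (mb + 1) < m"
  shows "real s \<le> real_of_int \<lceil>real m / (real mb + 1)\<rceil>"
proof -
  have "real (s - 1) * (real mb + 1) < real m" using assms
    by (metis of_nat_add of_nat_less_iff of_nat_mult of_nat_1)
  then have a: "real (s - 1) < real m / (real mb + 1)" by (simp add: field_simps)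
  have "real s \<le> real (s - 1) + 1" by linarith
  then have "real s < real m / (real mb + 1) + 1" using a by linarith
  also have "\<dots> \<le> real_of_int \<lceil>real m / (real mb + 1)\<rceil> + 1" by linarith
  finally have "real_of_int (int s) < real_of_int (\<lceil>real m / (real mb + 1)\<rceil> + 1)" by simp
  then have "int s < \<lceil>real m / (real mb + 1)\<rceil> + 1" by (simp only: of_int_less_iff)
  then have "int s \<le> \<lceil>real m / (real mb + 1)\<rceil>" by simp
  then show ?thesis by (metis of_int_le_iff of_int_of_nat_eq)
qed

lemma alg_id:
  fixes c cs m mb :: real
  assumes "mb > 0"
  shows "cs * c + cs / (mb * (mb + 1)) * m = ((c - m / (mb + 1)) + m / mb) * cs"
proof -
  have a: "mb + 1 \<noteq> 0" "mb \<noteq> 0" using assms by auto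
  have e: "1 / (mb * (mb + 1)) = 1 / mb - 1 / (mb + 1)"
    using a by (simp add: divide_simps)
  have "cs / (mb * (mb + 1)) * m = cs * m * (1 / (mb * (mb + 1)))" by simp
  also have "\<dots> = cs * m * (1 / mb - 1 / (mb + 1))" by (simp only: e)
  finally have "cs / (mb * (mb + 1)) * m = cs * m * (1 / mb) - cs * m * (1 / (mb + 1))"
    by (simp only: right_diff_distrib)
  then show ?thesis by (simp add: algebra_simps)
qed

theorem theorem2:
  fixes V :: "'v set" and E :: "'v set set" and Q R B :: "'v set"
    and h mbar :: nat and cs cr :: real and out :: "'v set \<times> 'v set"
  assumes "mssn_instance V E Q R B h"
    and "cs > 0" and "cr > 0"
    and "1 \<le> mbar" and "mbar < card Q"
    and "cs / cr \<ge> real mbar * (real mbar + 1) * (real h - 1)"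
    and "feasible_instance E Q R B h"
    and "smart_select_output cs cr V E Q R B h out"
  shows "sol_cost cs cr out / opt_cost cs cr E Q R B h \<le>
    (let m = real (card Q);
         \<epsilon> = real_of_int \<lceil>m / (real mbar + 1)\<rceil> - m / (real mbar + 1)
     in max (\<epsilon> + m / real mbar) (m / 2 * (1 + 1 / (real mbar * (real mbar + 1)))))"
proof -
  note inst = assms(1) and cs = assms(2) and cr = assms(3) and mb = assms(4)
  from inst have finV: "finite V" and V: "V = Q \<union> R \<union> B" and d1: "Q \<inter> R = {}" and d2: "Q \<inter> B = {}"
    and d3: "R \<inter> B = {}" and h0: "h > 0"
    unfolding mssn_instance_def is_graph_def by auto
  have finQ: "finite Q" and finR: "finite R" and finB: "finite B" using finV V by auto
  define m where "m = card Q"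
  have Qne: "Q \<noteq> {}" using assms(5) by auto
  define M where "M = real mbar * (real mbar + 1)"
  have M0: "M > 0" using mb unfolding M_def by simp
  have "M * (real h - 1) \<le> cs / cr" using assms(6) unfolding M_def by simp
  then have "cr * (M * (real h - 1)) \<le> cs" using cr by (simp add: pos_le_divide_eq mult.commute)
  then have hyp: "cr * (real h - 1) \<le> cs / M" using M0 by (simp add: pos_le_divide_eq mult_ac)
  define F where "F = {sol. feasible_sol E Q R B h sol}"
  have finF: "finite F"
  proof -
    have "F \<subseteq> Pow B \<times> Pow R" unfolding F_def feasible_sol_def by auto
    then show ?thesis using finB finR finite_subset by blast
  qed
  have Fne: "F \<noteq> {}" using assms(7) unfolding F_def feasible_instance_def by auto
  define OPT where "OPT = opt_cost cs cr E Q R B h"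
  have "OPT \<in> sol_cost cs cr ` F" unfolding OPT_def opt_cost_def F_def[symmetric]
    using finF Fne by (intro Min_in) auto
  then obtain Bs Rs0 where solF: "(Bs, Rs0) \<in> F" and OPTe: "OPT = sol_cost cs cr (Bs, Rs0)" by auto
  from solF have BsB: "Bs \<subseteq> B" and RsR: "Rs0 \<subseteq> R"
    and cov: "\<forall>q\<in>Q. \<exists>b\<in>Bs. reach_within E (Q \<union> Rs0 \<union> Bs) h q b"
    unfolding F_def feasible_sol_def by auto
  have finBs: "finite Bs" using BsB finB finite_subset by blast
  have Bsne: "Bs \<noteq> {}" using cov Qne by auto
  have OPTe2: "OPT = cs * real (card Bs) + cr * real (card Rs0)" using OPTe unfolding sol_cost_def by simp
  have OPTB: "OPT \<ge> cs * real (card Bs)" using OPTe2 cr by simp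
  have cB1: "card Bs \<ge> 1" using finBs Bsne by (simp add: Suc_leI card_gt_0_iff)
  have "cs * 1 \<le> cs * real (card Bs)" using cs cB1 by (intro mult_left_mono) auto
  then have OPTcs: "OPT \<ge> cs" using OPTB by linarith
  have OPT0: "OPT > 0" using OPTcs cs by linarith
  have cases2: "OPT \<ge> 2 * cs \<or> (\<exists>bs\<in>B. srcs_of V E Q h bs = Q)"
  proof (cases "card Bs \<ge> 2")
    case True
    then have "cs * 2 \<le> cs * real (card Bs)" using cs by (intro mult_left_mono) auto
    then show ?thesis using OPTB by linarith
  next
    case False
    then have "card Bs = 1" using cB1 by simp
    then obtain bs where bs: "Bs = {bs}" by (rule card_1_singletonE)
    have "srcs_of V E Q h bs = Q"
    proof -
      have "Q \<union> Rs0 \<union> Bs \<subseteq> V" using V RsR BsB by auto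
      have "\<forall>q\<in>Q. reach_within E V h q bs"
      proof
        fix q assume "q \<in> Q"
        then obtain b' where "b' \<in> Bs" "reach_within E (Q \<union> Rs0 \<union> Bs) h q b'" using cov by blast
        then have "reach_within E (Q \<union> Rs0 \<union> Bs) h q bs" using bs by simp
        then show "reach_within E V h q bs" by (rule reach_mono) fact
      qed
      then show ?thesis unfolding srcs_of_def by auto
    qed
    moreover have "bs \<in> B" using bs BsB by simp
    ultimately show ?thesis by blast
  qed
  define G where "G = (let m = real (card Q);
         \<epsilon> = real_of_int \<lceil>m / (real mbar + 1)\<rceil> - m / (real mbar + 1)
     in max (\<epsilon> + m / real mbar) (m / 2 * (1 + 1 / (real mbar * (real mbar + 1)))))"
  define eps where "eps = real_of_int \<lceil>real m / (real mbar + 1)\<rceil> - real m / (real mbar + 1)"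
  have Ge: "G = max (eps + real m / real mbar) (real m / 2 * (1 + 1 / M))"
    unfolding G_def eps_def m_def M_def Let_def by simp
  have "real m / (real mbar + 1) \<le> real_of_int \<lceil>real m / (real mbar + 1)\<rceil>"
    by (rule le_of_int_ceiling)
  then have eps0: "eps \<ge> 0" unfolding eps_def by simp
  have mm: "real m \<ge> real mbar" using assms(5) unfolding m_def by simp
  have G1: "G \<ge> 1"
  proof -
    have "real m / real mbar \<ge> 1" using mm mb by simp
    then show ?thesis unfolding Ge using eps0 by linarith
  qed
  have key: "sol_cost cs cr out \<le> G * OPT"
  proof (cases "\<exists>b\<in>B. \<forall>q\<in>Q. reach_within E (Q \<union> B) h q b")
    case True
    then obtain b where "out = ({b}, {})" using assms(8) unfolding smart_select_output_def if_P[OF True] by blast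
    then have "sol_cost cs cr out = cs" unfolding sol_cost_def by simp
    also have "\<dots> \<le> 1 * OPT" using OPTcs by simp
    also have "\<dots> \<le> G * OPT" using G1 OPT0 by (intro mult_right_mono) auto
    finally show ?thesis .
  next
    case False
    have "\<exists>P Rs. (greedy_step cs cr V E Q R B h)\<^sup>*\<^sup>* ({}, {}, {}) (P, Rs, Q) \<and> out = (P, Rs)"
      using assms(8) unfolding smart_select_output_def by (simp only: False if_False)
    then obtain P Rs where run: "(greedy_step cs cr V E Q R B h)\<^sup>*\<^sup>* ({}, {}, {}) (P, Rs, Q)"
      and out: "out = (P, Rs)" by blast
    from inv0_reach[OF inst run] have cR: "card Rs \<le> (h - 1) * m" and cP: "card P \<le> m"
      unfolding inv0_def m_def by auto
    have hr: "real (h - 1) = real h - 1" using h0 by simp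
    have "real (card Rs) \<le> real ((h - 1) * m)" using cR by (simp only: of_nat_le_iff)
    then have "real (card Rs) \<le> (real h - 1) * real m" using hr by simp
    then have "cr * real (card Rs) \<le> cr * ((real h - 1) * real m)" using cr by (intro mult_left_mono) auto
    also have "\<dots> = (cr * (real h - 1)) * real m" by simp
    also have "\<dots> \<le> (cs / M) * real m" using hyp by (intro mult_right_mono) auto
    finally have cost: "sol_cost cs cr out \<le> cs * real (card P) + cs / M * real m"
      unfolding out sol_cost_def by simp
    from cases2 show ?thesis
    proof
      assume O2: "OPT \<ge> 2 * cs"
      have "sol_cost cs cr out \<le> cs * real m + cs / M * real m"
      proof -
        have "cs * real (card P) \<le> cs * real m" using cP cs by (intro mult_left_mono) auto
        then show ?thesis using cost by linarith
      qed
      also have "\<dots> = (real m / 2 * (1 + 1 / M)) * (2 * cs)" using M0 by (simp add: field_simps)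
      also have "\<dots> \<le> G * (2 * cs)" unfolding Ge using cs by (intro mult_right_mono) auto
      also have "\<dots> \<le> G * OPT" using O2 G1 by (intro mult_left_mono) auto
      finally show ?thesis .
    next
      assume "\<exists>bs\<in>B. srcs_of V E Q h bs = Q"
      then obtain bs where bs: "bs \<in> B" "srcs_of V E Q h bs = Q" by auto
      have hyp': "cr * (real h - 1) \<le> cs / (real mbar * (real mbar + 1))" using hyp unfolding M_def .
      from inv1_reach[OF inst cs cr hyp' mb bs Qne run]
      have "(card P - 1) * (mbar + 1) < m" unfolding m_def by simp
      then have sP: "real (card P) \<le> real_of_int \<lceil>real m / (real mbar + 1)\<rceil>" by (rule ceil_bound)
      have "sol_cost cs cr out \<le> cs * real_of_int \<lceil>real m / (real mbar + 1)\<rceil> + cs / M * real m"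
      proof -
        have "cs * real (card P) \<le> cs * real_of_int \<lceil>real m / (real mbar + 1)\<rceil>"
          using sP cs by (intro mult_left_mono) auto
        then show ?thesis using cost by linarith
      qed
      also have "\<dots> = (eps + real m / real mbar) * cs" unfolding eps_def M_def
        using alg_id[of "real mbar" cs "real_of_int \<lceil>real m / (real mbar + 1)\<rceil>" "real m"] mb by simp
      also have "\<dots> \<le> G * cs" unfolding Ge using cs by (intro mult_right_mono) auto
      also have "\<dots> \<le> G * OPT" using OPTcs G1 by (intro mult_left_mono) auto
      finally show ?thesis .
    qed
  qed
  have "sol_cost cs cr out / OPT \<le> G" using key OPT0 by (simp add: pos_divide_le_eq)
  then show ?thesis unfolding OPT_def G_def .
qed

end
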